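(* Let $\mathcal{X}=\mathbb{Z}^d$ or $\mathbb{R}^d$ and let $(\phi_x)_{x\in\mathcal{X}}$ be a non-singular measurable flow on a $\sigma$-finite measure space $(S,\mathcal{B},\mu)$. There is a decomposition of $S$ into two disjoint measurable sets $S=N_0\cup N_+$ such that (i) $N_0$ and $N_+$ are $(\phi_x)_{x\in\mathcal{X}}$-invariant modulo null sets; (ii) for every non-negative $g\in L^1(S,\mu)$ supported on $N_0$, $\lim_{x\to\infty}\int_S(U_xg\wedge g)\,\mathrm{d}\mu=0$; (iii) for every non-negative $h\in L^1(S,\mu)$ supported on $N_+$ and not vanishing identically, $\limsup_{x\to\infty}\int_S(U_xh\wedge h)\,\mathrm{d}\mu>0$. Properties (ii) and (iii) determine $N_0$ and $N_+$ uniquely modulo null sets.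
   Context: A measurable non-singular flow: maps $\phi_x:S\to S$ with $\phi_0=\mathrm{id}$, $\phi_{x_1+x_2}=\phi_{x_2}\circ\phi_{x_1}$, $(x,s)\mapsto\phi_x(s)$ jointly measurable, and $\mu\circ\phi_x^{-1}$ equivalent to $\mu$ for every $x$. $\omega_x=\frac{\mathrm{d}(\mu\circ\phi_x)}{\mathrm{d}\mu}$, and $(U_xg)(s)=\omega_x(s)g(\phi_x(s))$ for $g\in L^1(S,\mu)$. $x\to\infty$ means $|x|\to\infty$. *)

theory Defs
  imports "HOL-Analysis.Analysis"
begin

definition lattice_or_space :: "(real^'d) set \<Rightarrow> bool" where
  "lattice_or_space G \<longleftrightarrow> G = UNIV \<or> G = {x. \<forall>i. x $ i \<in> \<int>}"

definition nonsingular_flow ::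
  "'a measure \<Rightarrow> (real^'d) set \<Rightarrow> (real^'d \<Rightarrow> 'a \<Rightarrow> 'a) \<Rightarrow> bool" where
  "nonsingular_flow M G \<phi> \<longleftrightarrow>
     (\<forall>s\<in>space M. \<phi> 0 s = s) \<and>
     (\<forall>x1\<in>G. \<forall>x2\<in>G. \<forall>s\<in>space M. \<phi> (x1 + x2) s = \<phi> x2 (\<phi> x1 s)) \<and>
     (\<lambda>(x, s). \<phi> x s) \<in> restrict_space borel G \<Otimes>\<^sub>M M \<rightarrow>\<^sub>M M \<and>
     (\<forall>x\<in>G. \<phi> x \<in> M \<rightarrow>\<^sub>M M \<and>
        (\<forall>A\<in>sets M. emeasure M (\<phi> x -` A \<inter> space M) = 0 \<longleftrightarrow> emeasure M A = 0))"

text \<open>omega_x = d(mu o phi_x)/d mu, where (mu o phi_x)(A) = mu(phi_x(A)) = mu(phi_{-x}^{-1}(A)).\<close>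
definition flow_weight ::
  "'a measure \<Rightarrow> (real^'d \<Rightarrow> 'a \<Rightarrow> 'a) \<Rightarrow> real^'d \<Rightarrow> 'a \<Rightarrow> ennreal" where
  "flow_weight M \<phi> x = RN_deriv M (distr M M (\<phi> (- x)))"

definition flow_op ::
  "'a measure \<Rightarrow> (real^'d \<Rightarrow> 'a \<Rightarrow> 'a) \<Rightarrow> real^'d \<Rightarrow> ('a \<Rightarrow> real) \<Rightarrow> 'a \<Rightarrow> ennreal" where
  "flow_op M \<phi> x g s = flow_weight M \<phi> x s * ennreal (g (\<phi> x s))"

definition overlap ::
  "'a measure \<Rightarrow> (real^'d \<Rightarrow> 'a \<Rightarrow> 'a) \<Rightarrow> real^'d \<Rightarrow> ('a \<Rightarrow> real) \<Rightarrow> ennreal" where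
  "overlap M \<phi> x g = (\<integral>\<^sup>+ s. min (flow_op M \<phi> x g s) (ennreal (g s)) \<partial>M)"

definition to_infinity :: "(real^'d) set \<Rightarrow> (real^'d) filter" where
  "to_infinity G = inf at_infinity (principal G)"

definition invariant_mod0 ::
  "'a measure \<Rightarrow> (real^'d) set \<Rightarrow> (real^'d \<Rightarrow> 'a \<Rightarrow> 'a) \<Rightarrow> 'a set \<Rightarrow> bool" where
  "invariant_mod0 M G \<phi> N \<longleftrightarrow>
     (\<forall>x\<in>G. emeasure M (((\<phi> x -` N \<inter> space M) - N) \<union> (N - (\<phi> x -` N \<inter> space M))) = 0)"

definition vanishing_part ::
  "'a measure \<Rightarrow> (real^'d) set \<Rightarrow> (real^'d \<Rightarrow> 'a \<Rightarrow> 'a) \<Rightarrow> 'a set \<Rightarrow> bool" where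
  "vanishing_part M G \<phi> N \<longleftrightarrow>
     (\<forall>g. integrable M g \<and> (AE s in M. g s \<ge> 0) \<and> (AE s in M. s \<notin> N \<longrightarrow> g s = 0) \<longrightarrow>
        ((\<lambda>x. overlap M \<phi> x g) \<longlongrightarrow> 0) (to_infinity G))"

definition positive_part ::
  "'a measure \<Rightarrow> (real^'d) set \<Rightarrow> (real^'d \<Rightarrow> 'a \<Rightarrow> 'a) \<Rightarrow> 'a set \<Rightarrow> bool" where
  "positive_part M G \<phi> N \<longleftrightarrow>
     (\<forall>h. integrable M h \<and> (AE s in M. h s \<ge> 0) \<and> (AE s in M. s \<notin> N \<longrightarrow> h s = 0)
          \<and> \<not> (AE s in M. h s = 0) \<longrightarrow>
        Limsup (to_infinity G) (\<lambda>x. overlap M \<phi> x h) > 0)"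

end

theory Submission
  imports Defs
begin



definition Uop :: "'a measure \<Rightarrow> (real^'d \<Rightarrow> 'a \<Rightarrow> 'a) \<Rightarrow> real^'d \<Rightarrow> ('a \<Rightarrow> ennreal) \<Rightarrow> 'a \<Rightarrow> ennreal" where
  "Uop M \<phi> x F s = flow_weight M \<phi> x s * F (\<phi> x s)"

definition ov :: "'a measure \<Rightarrow> (real^'d \<Rightarrow> 'a \<Rightarrow> 'a) \<Rightarrow> real^'d \<Rightarrow> ('a \<Rightarrow> ennreal) \<Rightarrow> ennreal" where
  "ov M \<phi> x F = (\<integral>\<^sup>+ s. min (Uop M \<phi> x F s) (F s) \<partial>M)"

lemma overlap_ov: "overlap M \<phi> x g = ov M \<phi> x (\<lambda>s. ennreal (g s))"
  unfolding overlap_def ov_def flow_op_def Uop_def by simp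

locale FL =
  fixes M :: "'a measure" and G :: "(real^'d) set" and \<phi> :: "real^'d \<Rightarrow> 'a \<Rightarrow> 'a"
  assumes LG: "lattice_or_space G"
    and SF: "sigma_finite_measure M"
    and NF: "nonsingular_flow M G \<phi>"
begin

interpretation sigma_finite_measure M by (rule SF)

lemma G_zero: "0 \<in> G"
  using LG unfolding lattice_or_space_def by (elim disjE) simp_all
lemma G_add: "x \<in> G \<Longrightarrow> y \<in> G \<Longrightarrow> x + y \<in> G"
  using LG unfolding lattice_or_space_def by (elim disjE) (simp_all add: Ints_add)
lemma G_uminus: "x \<in> G \<Longrightarrow> - x \<in> G"
  using LG unfolding lattice_or_space_def by (elim disjE) (simp_all add: Ints_minus)
lemma G_diff: "x \<in> G \<Longrightarrow> y \<in> G \<Longrightarrow> x - y \<in> G"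
  using G_add[of x "-y"] G_uminus[of y] by simp

lemma NFu: "(\<forall>s\<in>space M. \<phi> 0 s = s) \<and>
     (\<forall>x1\<in>G. \<forall>x2\<in>G. \<forall>s\<in>space M. \<phi> (x1 + x2) s = \<phi> x2 (\<phi> x1 s)) \<and>
     (\<lambda>(x, s). \<phi> x s) \<in> restrict_space borel G \<Otimes>\<^sub>M M \<rightarrow>\<^sub>M M \<and>
     (\<forall>x\<in>G. \<phi> x \<in> M \<rightarrow>\<^sub>M M \<and>
        (\<forall>A\<in>sets M. emeasure M (\<phi> x -` A \<inter> space M) = 0 \<longleftrightarrow> emeasure M A = 0))"
  using NF unfolding nonsingular_flow_def .

lemma NF4: "x \<in> G \<Longrightarrow> \<phi> x \<in> M \<rightarrow>\<^sub>M M \<and>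
        (\<forall>A\<in>sets M. emeasure M (\<phi> x -` A \<inter> space M) = 0 \<longleftrightarrow> emeasure M A = 0)"
  using conjunct2[OF conjunct2[OF conjunct2[OF NFu]]] by (rule bspec)

lemma phi_meas: "x \<in> G \<Longrightarrow> \<phi> x \<in> M \<rightarrow>\<^sub>M M"
  using NF4 by (rule conjunct1)
lemma phi_space: "x \<in> G \<Longrightarrow> s \<in> space M \<Longrightarrow> \<phi> x s \<in> space M"
  by (rule measurable_space[OF phi_meas])
lemma phi_comp: "x1 \<in> G \<Longrightarrow> x2 \<in> G \<Longrightarrow> s \<in> space M \<Longrightarrow> \<phi> (x1 + x2) s = \<phi> x2 (\<phi> x1 s)"
  by (rule bspec[OF bspec[OF bspec[OF conjunct1[OF conjunct2[OF NFu]]]]])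
lemma phi_zero: "s \<in> space M \<Longrightarrow> \<phi> 0 s = s"
  using conjunct1[OF NFu] by (rule bspec)
lemma phi_inv: "x \<in> G \<Longrightarrow> s \<in> space M \<Longrightarrow> \<phi> x (\<phi> (- x) s) = s"
proof -
  assume x: "x \<in> G" and s: "s \<in> space M"
  have "\<phi> (- x + x) s = \<phi> x (\<phi> (- x) s)" by (rule phi_comp[OF G_uminus[OF x] x s])
  moreover have "\<phi> (- x + x) s = s" using phi_zero[OF s] by simp
  ultimately show ?thesis by simp
qed
lemma phi_null: "x \<in> G \<Longrightarrow> A \<in> sets M \<Longrightarrow> emeasure M (\<phi> x -` A \<inter> space M) = 0 \<longleftrightarrow> emeasure M A = 0"
  by (rule bspec[OF conjunct2[OF NF4]])

lemma AE_pull: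
  assumes x: "x \<in> G" and P: "AE s in M. P s"
  shows "AE s in M. P (\<phi> x s)"
proof -
  obtain N where N: "{s \<in> space M. \<not> P s} \<subseteq> N" "emeasure M N = 0" "N \<in> sets M"
    using AE_E[OF P] by blast
  have S: "\<phi> x -` N \<inter> space M \<in> sets M" using measurable_sets[OF phi_meas[OF x] N(3)] .
  have Z: "emeasure M (\<phi> x -` N \<inter> space M) = 0" using phi_null[OF x N(3)] N(2) by simp
  have sub: "{s \<in> space M. \<not> P (\<phi> x s)} \<subseteq> \<phi> x -` N \<inter> space M"
  proof
    fix s assume "s \<in> {s \<in> space M. \<not> P (\<phi> x s)}"
    then have s: "s \<in> space M" "\<not> P (\<phi> x s)" by auto
    have "\<phi> x s \<in> space M" using phi_space[OF x s(1)] .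
    then have "\<phi> x s \<in> N" using N(1) s(2) by blast
    then show "s \<in> \<phi> x -` N \<inter> space M" using s(1) by blast
  qed
  show ?thesis by (rule AE_I'[OF null_setsI[OF Z S] sub])
qed

lemma abs_cont: "x \<in> G \<Longrightarrow> absolutely_continuous M (distr M M (\<phi> x))"
  unfolding absolutely_continuous_def
proof
  fix A assume x: "x \<in> G" and A: "A \<in> null_sets M"
  then have "emeasure (distr M M (\<phi> x)) A = emeasure M (\<phi> x -` A \<inter> space M)"
    using phi_meas[OF x] by (intro emeasure_distr) auto
  also have "\<dots> = 0" using phi_null[OF x] A by auto
  finally show "A \<in> null_sets (distr M M (\<phi> x))" using A by (auto simp: null_sets_def)
qed

lemma W_meas[measurable]: "flow_weight M \<phi> x \<in> borel_measurable M"
  unfolding flow_weight_def by simp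

lemma U_meas: "x \<in> G \<Longrightarrow> F \<in> borel_measurable M \<Longrightarrow> Uop M \<phi> x F \<in> borel_measurable M"
proof -
  assume x: "x \<in> G" and F: "F \<in> borel_measurable M"
  have "(\<lambda>s. F (\<phi> x s)) \<in> borel_measurable M" using measurable_compose[OF phi_meas[OF x] F] .
  then show ?thesis unfolding Uop_def by measurable
qed

lemma CI:
  assumes x: "x \<in> G" and F: "F \<in> borel_measurable M" and H: "H \<in> borel_measurable M"
  shows "(\<integral>\<^sup>+ s. H s * Uop M \<phi> x F s \<partial>M) = (\<integral>\<^sup>+ s. H (\<phi> (-x) s) * F s \<partial>M)"
proof -
  let ?N = "distr M M (\<phi> (-x))"
  have mx: "\<phi> (-x) \<in> M \<rightarrow>\<^sub>M M" using phi_meas G_uminus x by blast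
  have mx2: "\<phi> x \<in> M \<rightarrow>\<^sub>M M" using phi_meas x by blast
  have dens: "density M (flow_weight M \<phi> x) = ?N"
    unfolding flow_weight_def using abs_cont[OF G_uminus[OF x]]
    by (intro density_RN_deriv) auto
  have m: "(\<lambda>s. H s * F (\<phi> x s)) \<in> borel_measurable M" using H F mx2 by measurable
  have "(\<integral>\<^sup>+ s. H s * Uop M \<phi> x F s \<partial>M) = (\<integral>\<^sup>+ s. flow_weight M \<phi> x s * (H s * F (\<phi> x s)) \<partial>M)"
    unfolding Uop_def by (simp add: ac_simps)
  also have "\<dots> = integral\<^sup>N (density M (flow_weight M \<phi> x)) (\<lambda>s. H s * F (\<phi> x s))"
    using m by (simp add: nn_integral_density)
  also have "\<dots> = integral\<^sup>N ?N (\<lambda>s. H s * F (\<phi> x s))" by (simp add: dens)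
  also have "\<dots> = (\<integral>\<^sup>+ s. H (\<phi> (-x) s) * F (\<phi> x (\<phi> (-x) s)) \<partial>M)"
    using m mx by (intro nn_integral_distr) auto
  also have "\<dots> = (\<integral>\<^sup>+ s. H (\<phi> (-x) s) * F s \<partial>M)"
    by (intro nn_integral_cong) (simp add: phi_inv[OF x])
  finally show ?thesis .
qed

lemma ind_meas: "A \<in> sets M \<Longrightarrow> x \<in> G \<Longrightarrow> (\<lambda>s. indicator A (\<phi> x s) :: ennreal) \<in> borel_measurable M"
  using measurable_compose[OF phi_meas[of x] borel_measurable_indicator[of A M]] by simp

lemma cocycle:
  assumes y: "y \<in> G" and z: "z \<in> G" and F: "F \<in> borel_measurable M"
  shows "AE s in M. Uop M \<phi> (-z) (Uop M \<phi> y F) s = Uop M \<phi> (y - z) F s"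
proof (rule density_unique)
  have mz: "-z \<in> G" using G_uminus z by blast
  have myz: "y - z \<in> G" using G_diff y z by blast
  show m1: "Uop M \<phi> (-z) (Uop M \<phi> y F) \<in> borel_measurable M"
    using U_meas[OF mz U_meas[OF y F]] .
  show m2: "Uop M \<phi> (y - z) F \<in> borel_measurable M" using U_meas[OF myz F] .
  show "density M (Uop M \<phi> (-z) (Uop M \<phi> y F)) = density M (Uop M \<phi> (y - z) F)"
  proof (rule measure_eqI)
    fix A assume A: "A \<in> sets (density M (Uop M \<phi> (-z) (Uop M \<phi> y F)))"
    then have A: "A \<in> sets M" by simp
    have "emeasure (density M (Uop M \<phi> (-z) (Uop M \<phi> y F))) A
       = (\<integral>\<^sup>+ s. indicator A s * Uop M \<phi> (-z) (Uop M \<phi> y F) s \<partial>M)"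
      using A m1 by (simp add: emeasure_density ac_simps)
    also have "\<dots> = (\<integral>\<^sup>+ s. indicator A (\<phi> z s) * Uop M \<phi> y F s \<partial>M)"
      using CI[OF mz U_meas[OF y F], of "indicator A"] A by simp
    also have "\<dots> = (\<integral>\<^sup>+ s. indicator A (\<phi> z (\<phi> (-y) s)) * F s \<partial>M)"
      using CI[OF y F ind_meas[OF A z]] .
    also have "\<dots> = (\<integral>\<^sup>+ s. indicator A (\<phi> (-(y - z)) s) * F s \<partial>M)"
      by (intro nn_integral_cong) (simp add: phi_comp[OF G_uminus[OF y] z, symmetric])
    also have "\<dots> = (\<integral>\<^sup>+ s. indicator A s * Uop M \<phi> (y - z) F s \<partial>M)"
      using CI[OF myz F, of "indicator A"] A by simp
    also have "\<dots> = emeasure (density M (Uop M \<phi> (y - z) F)) A"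
      using A m2 by (simp add: emeasure_density ac_simps)
    finally show "emeasure (density M (Uop M \<phi> (-z) (Uop M \<phi> y F))) A = emeasure (density M (Uop M \<phi> (y - z) F)) A" .
  qed simp
qed

lemma U_zero:
  assumes F: "F \<in> borel_measurable M"
  shows "AE s in M. Uop M \<phi> 0 F s = F s"
proof (rule density_unique)
  show m1: "Uop M \<phi> 0 F \<in> borel_measurable M" using U_meas[OF G_zero F] .
  show "F \<in> borel_measurable M" by fact
  show "density M (Uop M \<phi> 0 F) = density M F"
  proof (rule measure_eqI)
    fix A assume A: "A \<in> sets (density M (Uop M \<phi> 0 F))"
    then have A: "A \<in> sets M" by simp
    have "emeasure (density M (Uop M \<phi> 0 F)) A = (\<integral>\<^sup>+ s. indicator A s * Uop M \<phi> 0 F s \<partial>M)"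
      using A m1 by (simp add: emeasure_density ac_simps)
    also have "\<dots> = (\<integral>\<^sup>+ s. indicator A (\<phi> (-0) s) * F s \<partial>M)"
      using CI[OF G_zero F, of "indicator A"] A by simp
    also have "\<dots> = (\<integral>\<^sup>+ s. indicator A s * F s \<partial>M)"
      by (intro nn_integral_cong) (simp add: phi_zero)
    also have "\<dots> = emeasure (density M F) A"
      using A F by (simp add: emeasure_density ac_simps)
    finally show "emeasure (density M (Uop M \<phi> 0 F)) A = emeasure (density M F) A" .
  qed simp
qed

lemma mass:
  assumes x: "x \<in> G" and F: "F \<in> borel_measurable M"
  shows "(\<integral>\<^sup>+ s. Uop M \<phi> x F s \<partial>M) = (\<integral>\<^sup>+ s. F s \<partial>M)"
  using CI[OF x F, of "\<lambda>_. 1"] by simp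

lemma mult_min_ennreal: "(w::ennreal) * min a b = min (w * a) (w * b)"
proof (cases "a \<le> b")
  case True
  then have "w * a \<le> w * b" by (simp add: mult_left_mono)
  then show ?thesis using True by (simp add: min_def)
next
  case False
  then have "w * b \<le> w * a" by (simp add: mult_left_mono)
  then show ?thesis using False by (auto simp: min_def)
qed

lemma U_min: "Uop M \<phi> x (\<lambda>s. min (F s) (H s)) s = min (Uop M \<phi> x F s) (Uop M \<phi> x H s)"
  unfolding Uop_def by (simp add: mult_min_ennreal)

lemma pair:
  assumes y: "y \<in> G" and z: "z \<in> G" and a: "a \<in> borel_measurable M"
  shows "(\<integral>\<^sup>+ s. min (Uop M \<phi> y a s) (Uop M \<phi> z a s) \<partial>M) = ov M \<phi> (y - z) a"
proof -
  have mz: "-z \<in> G" using G_uminus z by blast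
  have m: "(\<lambda>s. min (Uop M \<phi> y a s) (Uop M \<phi> z a s)) \<in> borel_measurable M"
    using U_meas[OF y a] U_meas[OF z a] by measurable
  have "(\<integral>\<^sup>+ s. min (Uop M \<phi> y a s) (Uop M \<phi> z a s) \<partial>M)
     = (\<integral>\<^sup>+ s. Uop M \<phi> (-z) (\<lambda>s. min (Uop M \<phi> y a s) (Uop M \<phi> z a s)) s \<partial>M)"
    using mass[OF mz m] by simp
  also have "\<dots> = (\<integral>\<^sup>+ s. min (Uop M \<phi> (-z) (Uop M \<phi> y a) s) (Uop M \<phi> (-z) (Uop M \<phi> z a) s) \<partial>M)"
    by (simp add: U_min)
  also have "\<dots> = (\<integral>\<^sup>+ s. min (Uop M \<phi> (y - z) a s) (a s) \<partial>M)"
  proof (rule nn_integral_cong_AE)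
    show "AE s in M. min (Uop M \<phi> (-z) (Uop M \<phi> y a) s) (Uop M \<phi> (-z) (Uop M \<phi> z a) s) = min (Uop M \<phi> (y - z) a s) (a s)"
      using cocycle[OF y z a] cocycle[OF z z a] U_zero[OF a] by eventually_elim simp
  qed
  finally show ?thesis unfolding ov_def .
qed

end



lemma pairsum_aux:
  fixes c :: "nat \<Rightarrow> ennreal"
  shows "0 < K \<Longrightarrow> \<exists>m<K. (\<Sum>i<K. c i) \<le> c m + (\<Sum>j<K. \<Sum>i<j. min (c i) (c j))"
proof (induction K)
  case 0 then show ?case by simp
next
  case (Suc n)
  show ?case
  proof (cases "n = 0")
    case True then show ?thesis by simp
  next
    case False
    then obtain m where m: "m < n" "(\<Sum>i<n. c i) \<le> c m + (\<Sum>j<n. \<Sum>i<j. min (c i) (c j))"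
      using Suc.IH by auto
    have mm: "min (c m) (c n) \<le> (\<Sum>i<n. min (c i) (c n))"
      using m(1) by (intro member_le_sum) auto
    have cc: "c m + c n = max (c m) (c n) + min (c m) (c n)"
      by (cases "c m \<le> c n") (auto simp: max_def min_def add.commute)
    define m' where "m' = (if c m \<le> c n then n else m)"
    have m'1: "m' < Suc n" using m(1) by (simp add: m'_def)
    have m'2: "max (c m) (c n) = c m'" by (simp add: m'_def max_def)
    have "(\<Sum>i<Suc n. c i) = (\<Sum>i<n. c i) + c n" by simp
    also have "\<dots> \<le> c m + (\<Sum>j<n. \<Sum>i<j. min (c i) (c j)) + c n" using m(2) by (intro add_right_mono)
    also have "\<dots> = (c m + c n) + (\<Sum>j<n. \<Sum>i<j. min (c i) (c j))" by (simp add: ac_simps)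
    also have "\<dots> = c m' + min (c m) (c n) + (\<Sum>j<n. \<Sum>i<j. min (c i) (c j))" using cc m'2 by simp
    also have "\<dots> \<le> c m' + (\<Sum>i<n. min (c i) (c n)) + (\<Sum>j<n. \<Sum>i<j. min (c i) (c j))"
      using mm by (intro add_right_mono add_left_mono)
    also have "\<dots> = c m' + (\<Sum>j<Suc n. \<Sum>i<j. min (c i) (c j))" by (simp add: ac_simps)
    finally show ?thesis using m'1 by blast
  qed
qed

lemma pairsum:
  fixes c :: "nat \<Rightarrow> ennreal"
  assumes "\<And>i. c i \<le> \<beta>"
  shows "(\<Sum>i<K. c i) \<le> \<beta> + (\<Sum>j<K. \<Sum>i<j. min (c i) (c j))"
proof (cases "K = 0")
  case False
  then obtain m where "m < K" "(\<Sum>i<K. c i) \<le> c m + (\<Sum>j<K. \<Sum>i<j. min (c i) (c j))"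
    using pairsum_aux[of K c] by auto
  then show ?thesis using assms[of m] by (meson add_right_mono order_trans)
qed simp

lemma count_bound:
  fixes \<delta> :: ennreal
  shows "(\<Sum>j<K. \<Sum>i<j. \<delta>) \<le> of_nat K * (of_nat K * \<delta>)"
proof -
  have "(\<Sum>j<K. \<Sum>i<j. \<delta>) \<le> (\<Sum>j<K. of_nat K * \<delta>)"
    by (intro sum_mono) (simp add: mult_right_mono)
  then show ?thesis by simp
qed

lemma KK_one: "0 < K \<Longrightarrow> (of_nat K * (of_nat K * ennreal (1 / (real K * real K))) :: ennreal) = 1"
  by (simp add: ennreal_of_nat_eq_real_of_nat ennreal_mult'[symmetric] ennreal_mult[symmetric])

lemma ev_toinf: "eventually P (to_infinity G) \<longleftrightarrow> (\<exists>b. \<forall>x. b \<le> norm x \<longrightarrow> x \<in> G \<longrightarrow> P x)"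
  unfolding to_infinity_def eventually_inf_principal eventually_at_infinity by simp

lemma norm_seq:
  fixes xs :: "nat \<Rightarrow> 'b::real_normed_vector"
  assumes step: "\<And>n. norm (xs (Suc n)) \<ge> norm (xs n) + R" and R: "R \<ge> 0"
  shows "i < j \<Longrightarrow> norm (xs i - xs j) \<ge> R"
proof -
  have mono: "i < j \<Longrightarrow> norm (xs j) \<ge> norm (xs i) + R" for j
  proof (induction j)
    case 0 then show ?case by simp
  next
    case (Suc k)
    show ?case
    proof (cases "i = k")
      case True then show ?thesis using step[of k] by simp
    next
      case False then have "i < k" using Suc.prems by simp
      then show ?thesis using Suc.IH step[of k] R by linarith
    qed
  qed
  assume "i < j"
  then have "norm (xs j) - norm (xs i) \<ge> R" using mono[of j] by linarith
  moreover have "norm (xs j) - norm (xs i) \<le> norm (xs i - xs j)"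
    using norm_triangle_ineq2[of "xs j" "xs i"] by (simp add: norm_minus_commute)
  ultimately show ?thesis by simp
qed




context FL begin

lemma lemC:
  assumes a: "a \<in> borel_measurable M" and ova: "((\<lambda>x. ov M \<phi> x a) \<longlongrightarrow> 0) (to_infinity G)"
    and b: "b \<in> borel_measurable M" and bfin: "(\<integral>\<^sup>+ s. b s \<partial>M) \<noteq> \<infinity>"
  shows "((\<lambda>x. \<integral>\<^sup>+ s. min (Uop M \<phi> x a s) (b s) \<partial>M) \<longlongrightarrow> 0) (to_infinity G)"
proof (rule order_tendstoI)
  fix e :: ennreal assume "e < 0" then show "eventually (\<lambda>x. e < (\<integral>\<^sup>+ s. min (Uop M \<phi> x a s) (b s) \<partial>M)) (to_infinity G)"
    by simp
next
  fix e :: ennreal assume e: "0 < e"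
  define f where "f x = (\<integral>\<^sup>+ s. min (Uop M \<phi> x a s) (b s) \<partial>M)" for x
  obtain r where r: "0 < r" "ennreal r \<le> e"
  proof (cases "e = \<infinity>")
    case True then show ?thesis using that[of 1] by simp
  next
    case False then show ?thesis using that[of "enn2real e"] e
      by (simp add: enn2real_positive_iff less_top)
  qed
  have "eventually (\<lambda>x. f x < ennreal r) (to_infinity G)"
  proof (rule ccontr)
    assume "\<not> ?thesis"
    then have H: "\<forall>R. \<exists>x. R \<le> norm x \<and> x \<in> G \<and> ennreal r \<le> f x"
      unfolding ev_toinf by (auto simp: not_less)
    then obtain p where p: "\<And>R. R \<le> norm (p R) \<and> p R \<in> G \<and> ennreal r \<le> f (p R)"
      by metis
    define B where "B = enn2real (\<integral>\<^sup>+ s. b s \<partial>M)"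
    have BB: "(\<integral>\<^sup>+ s. b s \<partial>M) = ennreal B" using bfin by (simp add: B_def less_top)
    have B0: "B \<ge> 0" by (simp add: B_def)
    obtain K :: nat where K: "B + 1 < real K * r" using ex_less_of_nat_mult[OF r(1), of "B + 1"] by auto
    have K0: "0 < K" using K B0 r by (cases K) auto
    define \<delta> where "\<delta> = ennreal (1 / (real K * real K))"
    have \<delta>0: "0 < \<delta>" using K0 by (simp add: \<delta>_def)
    from ova \<delta>0 have "eventually (\<lambda>x. ov M \<phi> x a < \<delta>) (to_infinity G)"
      by (rule order_tendstoD)
    then obtain R0 where R0: "\<And>v. R0 \<le> norm v \<Longrightarrow> v \<in> G \<Longrightarrow> ov M \<phi> v a < \<delta>"
      unfolding ev_toinf by auto
    define R where "R = max R0 0"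
    define xs where "xs = rec_nat (p R) (\<lambda>n v. p (norm v + R))"
    have xs0: "xs 0 = p R" and xsS: "xs (Suc n) = p (norm (xs n) + R)" for n
      by (simp_all add: xs_def)
    have xsG: "xs n \<in> G" and xsf: "ennreal r \<le> f (xs n)" for n
      by (cases n; simp add: xs0 xsS p)+
    have step: "norm (xs (Suc n)) \<ge> norm (xs n) + R" for n using p by (simp add: xsS)
    have far: "i < j \<Longrightarrow> ov M \<phi> (xs i - xs j) a < \<delta>" for i j
      using norm_seq[of xs R, OF step] R0 G_diff[OF xsG xsG] by (auto simp: R_def)
    have mU: "\<And>x. x \<in> G \<Longrightarrow> Uop M \<phi> x a \<in> borel_measurable M" using U_meas a by blast
    have mi: "(\<lambda>s. min (Uop M \<phi> (xs i) a s) (b s)) \<in> borel_measurable M" for i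
      using mU[OF xsG] b by measurable
    have "ennreal (real K * r) = (\<Sum>i<K. ennreal r)"
      by (simp add: ennreal_of_nat_eq_real_of_nat ennreal_mult')
    also have "\<dots> \<le> (\<Sum>i<K. f (xs i))" by (intro sum_mono xsf)
    also have "\<dots> = (\<integral>\<^sup>+ s. (\<Sum>i<K. min (Uop M \<phi> (xs i) a s) (b s)) \<partial>M)"
      unfolding f_def using mi by (intro nn_integral_sum[symmetric]) auto
    also have "\<dots> \<le> (\<integral>\<^sup>+ s. b s + (\<Sum>j<K. \<Sum>i<j. min (min (Uop M \<phi> (xs i) a s) (b s)) (min (Uop M \<phi> (xs j) a s) (b s))) \<partial>M)"
      by (intro nn_integral_mono pairsum) simp
    also have "\<dots> \<le> (\<integral>\<^sup>+ s. b s + (\<Sum>j<K. \<Sum>i<j. min (Uop M \<phi> (xs i) a s) (Uop M \<phi> (xs j) a s)) \<partial>M)"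
      by (intro nn_integral_mono add_left_mono sum_mono) (auto intro: min.coboundedI1 min.coboundedI2)
    also have "\<dots> = (\<integral>\<^sup>+ s. b s \<partial>M) + (\<Sum>j<K. \<Sum>i<j. \<integral>\<^sup>+ s. min (Uop M \<phi> (xs i) a s) (Uop M \<phi> (xs j) a s) \<partial>M)"
      using mU[OF xsG] b
      by (simp add: nn_integral_add nn_integral_sum)
    also have "\<dots> = ennreal B + (\<Sum>j<K. \<Sum>i<j. ov M \<phi> (xs i - xs j) a)"
      using pair[OF xsG xsG a] BB by simp
    also have "\<dots> \<le> ennreal B + (\<Sum>j<K. \<Sum>i<j. \<delta>)"
      using far by (intro add_left_mono sum_mono less_imp_le) auto
    also have "\<dots> \<le> ennreal B + of_nat K * (of_nat K * \<delta>)"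
      by (intro add_left_mono count_bound)
    also have "\<dots> = ennreal (B + 1)" using KK_one[OF K0] B0 by (simp add: \<delta>_def ennreal_plus)
    finally have X: "ennreal (real K * r) \<le> ennreal (B + 1)" .
    have "real K * r \<le> B + 1" using X B0 ennreal_le_iff by (metis add_nonneg_nonneg zero_le_one)
    then show False using K by simp
  qed
  then show "eventually (\<lambda>x. (\<integral>\<^sup>+ s. min (Uop M \<phi> x a s) (b s) \<partial>M) < e) (to_infinity G)"
    by eventually_elim (use r in \<open>auto simp: f_def\<close>)
qed

end



lemma le_tendsto0:
  fixes f g :: "_ \<Rightarrow> ennreal"
  assumes "eventually (\<lambda>x. f x \<le> g x) F" "(g \<longlongrightarrow> 0) F"
  shows "(f \<longlongrightarrow> 0) F"
  by (rule tendsto_sandwich[of "\<lambda>_. 0" f F g]) (use assms in auto)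

lemma min4:
  fixes p q r t :: ennreal
  shows "min (p + q) (r + t) \<le> min p r + min q t + min p t + min q r"
proof -
  have A: "min (p + q) (r + t) \<le> p + q" "min (p + q) (r + t) \<le> r + t" by auto
  have B: "min p r + min q t \<le> min p r + min q t + min p t + min q r"
    "min p r + min q r \<le> min p r + min q t + min p t + min q r"
    "min q r + min q t \<le> min p r + min q t + min p t + min q r"
    "min p t + min q t \<le> min p r + min q t + min p t + min q r"
    "min p r + min p t \<le> min p r + min q t + min p t + min q r"
    by (simp_all add: add_increasing2 add_increasing ac_simps add_mono)
  consider "p \<le> r" "q \<le> t" | "p \<le> r" "t < q" "q \<le> r" | "p \<le> r" "t < q" "r < q"
    | "r < p" "t \<le> q" | "r < p" "q < t" "p \<le> t" | "r < p" "q < t" "t < p"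
    by fastforce
  then show ?thesis
  proof cases
    case 1 then have "p + q = min p r + min q t" by (simp add: min.absorb1)
    then show ?thesis using A B by (metis order_trans)
  next
    case 2 then have "p + q = min p r + min q r" by (simp add: min.absorb1)
    then show ?thesis using A B by (metis order_trans)
  next
    case 3 then have "r + t = min q r + min q t" by (simp add: min.absorb2 add.commute)
    then show ?thesis using A B by (metis order_trans)
  next
    case 4 then have "r + t = min p r + min q t" by (simp add: min.absorb2)
    then show ?thesis using A B by (metis order_trans)
  next
    case 5 then have "p + q = min p t + min q t" by (simp add: min.absorb1)
    then show ?thesis using A B by (metis order_trans)
  next
    case 6 then have "r + t = min p r + min p t" by (simp add: min.absorb2)
    then show ?thesis using A B by (metis order_trans)
  qed
qed

lemma min3:
  fixes p q r t :: ennreal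
  shows "min (p + q) (r + t) \<le> min p r + q + t"
proof (cases "p \<le> r")
  case True
  have "min (p + q) (r + t) \<le> p + q" by simp
  also have "\<dots> \<le> p + q + t" by (simp add: add_increasing2)
  finally show ?thesis using True by (simp add: min.absorb1)
next
  case False
  have "min (p + q) (r + t) \<le> r + t" by simp
  also have "\<dots> \<le> r + q + t" by (simp add: add_increasing2 add_mono)
  finally show ?thesis using False by (simp add: min.absorb2)
qed

context FL begin

definition Vs :: "'a set \<Rightarrow> bool" where
  "Vs A \<longleftrightarrow> A \<in> sets M \<and> (\<forall>F. F \<in> borel_measurable M \<and> (\<integral>\<^sup>+ s. F s \<partial>M) \<noteq> \<infinity> \<and>
       (AE s in M. s \<notin> A \<longrightarrow> F s = 0) \<longrightarrow> ((\<lambda>x. ov M \<phi> x F) \<longlongrightarrow> 0) (to_infinity G))"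

lemma U_add: "Uop M \<phi> x (\<lambda>s. F s + H s) s = Uop M \<phi> x F s + Uop M \<phi> x H s"
  unfolding Uop_def by (simp add: distrib_left)

lemma approxD:
  assumes F: "F \<in> borel_measurable M"
    and app: "\<And>e. 0 < e \<Longrightarrow> \<exists>F'. F' \<in> borel_measurable M \<and> (\<forall>s. F' s \<le> F s) \<and>
        (\<integral>\<^sup>+ s. F s - F' s \<partial>M) < ennreal e \<and> ((\<lambda>x. ov M \<phi> x F') \<longlongrightarrow> 0) (to_infinity G)"
  shows "((\<lambda>x. ov M \<phi> x F) \<longlongrightarrow> 0) (to_infinity G)"
proof (rule order_tendstoI)
  fix e :: ennreal assume "e < 0" then show "eventually (\<lambda>x. e < ov M \<phi> x F) (to_infinity G)" by simp
next
  fix e :: ennreal assume e: "0 < e"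
  obtain r where r: "0 < r" "ennreal r \<le> e"
  proof (cases "e = \<infinity>")
    case True then show ?thesis using that[of 1] by simp
  next
    case False then show ?thesis using that[of "enn2real e"] e
      by (simp add: enn2real_positive_iff less_top)
  qed
  obtain F' where F': "F' \<in> borel_measurable M" "\<And>s. F' s \<le> F s"
    "(\<integral>\<^sup>+ s. F s - F' s \<partial>M) < ennreal (r/4)" "((\<lambda>x. ov M \<phi> x F') \<longlongrightarrow> 0) (to_infinity G)"
    using app[of "r/4"] r by auto
  define D where "D s = F s - F' s" for s
  have Dm: "D \<in> borel_measurable M" using F F' unfolding D_def by measurable
  have FD: "F s = F' s + D s" for s using F'(2)[of s] by (simp add: D_def add_diff_inverse_ennreal)
  have FD': "F = (\<lambda>s. F' s + D s)" by (rule ext) (rule FD)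
  have ev: "eventually (\<lambda>x. ov M \<phi> x F' < ennreal (r/4)) (to_infinity G)"
    using F'(4) r by (intro order_tendstoD) auto
  have ev2: "eventually (\<lambda>x. x \<in> G) (to_infinity G)"
    unfolding to_infinity_def eventually_inf_principal by simp
  from ev ev2 show "eventually (\<lambda>x. ov M \<phi> x F < e) (to_infinity G)"
  proof eventually_elim
    case (elim x)
    have "ov M \<phi> x F = (\<integral>\<^sup>+ s. min (Uop M \<phi> x F' s + Uop M \<phi> x D s) (F' s + D s) \<partial>M)"
      unfolding ov_def by (subst FD') (simp add: U_add FD)
    also have "\<dots> \<le> (\<integral>\<^sup>+ s. min (Uop M \<phi> x F' s) (F' s) + Uop M \<phi> x D s + D s \<partial>M)"
      by (intro nn_integral_mono min3)
    also have "\<dots> = ov M \<phi> x F' + (\<integral>\<^sup>+ s. Uop M \<phi> x D s \<partial>M) + (\<integral>\<^sup>+ s. D s \<partial>M)"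
      unfolding ov_def using U_meas[OF elim(2) F'(1)] U_meas[OF elim(2) Dm] F'(1) Dm
      by (simp add: nn_integral_add)
    also have "\<dots> = ov M \<phi> x F' + (\<integral>\<^sup>+ s. D s \<partial>M) + (\<integral>\<^sup>+ s. D s \<partial>M)"
      using mass[OF elim(2) Dm] by simp
    also have "\<dots> \<le> ennreal (r/4) + ennreal (r/4) + ennreal (r/4)"
      using elim(1) F'(3) unfolding D_def by (intro add_mono less_imp_le) auto
    also have "\<dots> = ennreal (3 * r / 4)" using r by (simp add: ennreal_plus[symmetric])
    also have "\<dots> < ennreal r" using r by (simp add: ennreal_less_iff)
    finally show ?case using r(2) by simp
  qed
qed

lemma ov_le: "ov M \<phi> x F \<le> (\<integral>\<^sup>+ s. F s \<partial>M)"
  unfolding ov_def by (intro nn_integral_mono) simp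

lemma Vs_empty: "Vs {}"
  unfolding Vs_def
proof (intro conjI allI impI)
  fix F assume F: "F \<in> borel_measurable M \<and> (\<integral>\<^sup>+ s. F s \<partial>M) \<noteq> \<infinity> \<and> (AE s in M. s \<notin> {} \<longrightarrow> F s = 0)"
  then have "(\<integral>\<^sup>+ s. F s \<partial>M) = 0" by (subst nn_integral_0_iff_AE) auto
  then have "\<And>x. ov M \<phi> x F = 0" using ov_le by (metis le_zero_eq)
  then show "((\<lambda>x. ov M \<phi> x F) \<longlongrightarrow> 0) (to_infinity G)" by simp
qed simp

end



context FL begin

lemma evG: "eventually (\<lambda>x. x \<in> G) (to_infinity G)"
  unfolding to_infinity_def eventually_inf_principal by simp

lemma VsD: "Vs A \<Longrightarrow> F \<in> borel_measurable M \<Longrightarrow> (\<integral>\<^sup>+ s. F s \<partial>M) \<noteq> \<infinity> \<Longrightarrow>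
   (AE s in M. s \<notin> A \<longrightarrow> F s = 0) \<Longrightarrow> ((\<lambda>x. ov M \<phi> x F) \<longlongrightarrow> 0) (to_infinity G)"
  unfolding Vs_def by blast

lemma Vs_Un:
  assumes VA: "Vs A" and VB: "Vs B"
  shows "Vs (A \<union> B)"
  unfolding Vs_def
proof (intro conjI allI impI)
  have A[measurable]: "A \<in> sets M" and B: "B \<in> sets M" using VA VB by (auto simp: Vs_def)
  then show "A \<union> B \<in> sets M" by auto
  fix F assume H: "F \<in> borel_measurable M \<and> (\<integral>\<^sup>+ s. F s \<partial>M) \<noteq> \<infinity> \<and> (AE s in M. s \<notin> A \<union> B \<longrightarrow> F s = 0)"
  then have F[measurable]: "F \<in> borel_measurable M" and Ffin: "(\<integral>\<^sup>+ s. F s \<partial>M) \<noteq> \<infinity>"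
    and Fsupp: "AE s in M. s \<notin> A \<union> B \<longrightarrow> F s = 0" by auto
  define a where "a s = (if s \<in> A then F s else 0)" for s
  define c where "c s = (if s \<in> A then 0 else F s)" for s
  have am: "a \<in> borel_measurable M" unfolding a_def by measurable
  have cm: "c \<in> borel_measurable M" unfolding c_def by measurable
  have "(\<integral>\<^sup>+ s. a s \<partial>M) \<le> (\<integral>\<^sup>+ s. F s \<partial>M)" by (intro nn_integral_mono) (simp add: a_def)
  then have afin: "(\<integral>\<^sup>+ s. a s \<partial>M) \<noteq> \<infinity>" using Ffin by (auto simp: top_unique)
  have "(\<integral>\<^sup>+ s. c s \<partial>M) \<le> (\<integral>\<^sup>+ s. F s \<partial>M)" by (intro nn_integral_mono) (simp add: c_def)
  then have cfin: "(\<integral>\<^sup>+ s. c s \<partial>M) \<noteq> \<infinity>" using Ffin by (auto simp: top_unique)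
  have ova: "((\<lambda>x. ov M \<phi> x a) \<longlongrightarrow> 0) (to_infinity G)"
    by (rule VsD[OF VA am afin]) (auto simp: a_def)
  have ovc: "((\<lambda>x. ov M \<phi> x c) \<longlongrightarrow> 0) (to_infinity G)"
    by (rule VsD[OF VB cm cfin]) (use Fsupp in \<open>auto simp: c_def\<close>)
  have FS: "F = (\<lambda>s. a s + c s)" by (auto simp: a_def c_def)
  have FSp: "F s = a s + c s" for s by (auto simp: a_def c_def)
  have t1: "((\<lambda>x. \<integral>\<^sup>+ s. min (Uop M \<phi> x a s) (c s) \<partial>M) \<longlongrightarrow> 0) (to_infinity G)"
    by (rule lemC[OF am ova cm cfin])
  have t2: "((\<lambda>x. \<integral>\<^sup>+ s. min (Uop M \<phi> x c s) (a s) \<partial>M) \<longlongrightarrow> 0) (to_infinity G)"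
    by (rule lemC[OF cm ovc am afin])
  have tsum: "((\<lambda>x. ov M \<phi> x a + ov M \<phi> x c + (\<integral>\<^sup>+ s. min (Uop M \<phi> x a s) (c s) \<partial>M)
      + (\<integral>\<^sup>+ s. min (Uop M \<phi> x c s) (a s) \<partial>M)) \<longlongrightarrow> 0) (to_infinity G)"
    using tendsto_add[OF tendsto_add[OF tendsto_add[OF ova ovc] t1] t2] by simp
  show "((\<lambda>x. ov M \<phi> x F) \<longlongrightarrow> 0) (to_infinity G)"
  proof (rule le_tendsto0[OF _ tsum])
    show "eventually (\<lambda>x. ov M \<phi> x F \<le> ov M \<phi> x a + ov M \<phi> x c + (\<integral>\<^sup>+ s. min (Uop M \<phi> x a s) (c s) \<partial>M)
      + (\<integral>\<^sup>+ s. min (Uop M \<phi> x c s) (a s) \<partial>M)) (to_infinity G)"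
      using evG
    proof eventually_elim
      case (elim x)
      have Ua: "Uop M \<phi> x a \<in> borel_measurable M" using U_meas[OF elim am] .
      have Uc: "Uop M \<phi> x c \<in> borel_measurable M" using U_meas[OF elim cm] .
      have "ov M \<phi> x F = (\<integral>\<^sup>+ s. min (Uop M \<phi> x a s + Uop M \<phi> x c s) (a s + c s) \<partial>M)"
        unfolding ov_def by (subst FS) (simp add: U_add FSp)
      also have "\<dots> \<le> (\<integral>\<^sup>+ s. min (Uop M \<phi> x a s) (a s) + min (Uop M \<phi> x c s) (c s)
          + min (Uop M \<phi> x a s) (c s) + min (Uop M \<phi> x c s) (a s) \<partial>M)"
        by (intro nn_integral_mono min4)
      also have "\<dots> = ov M \<phi> x a + ov M \<phi> x c + (\<integral>\<^sup>+ s. min (Uop M \<phi> x a s) (c s) \<partial>M)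
          + (\<integral>\<^sup>+ s. min (Uop M \<phi> x c s) (a s) \<partial>M)"
        unfolding ov_def using Ua Uc am cm by (simp add: nn_integral_add)
      finally show ?case .
    qed
  qed
qed

lemma Vs_fin:
  fixes A :: "nat \<Rightarrow> 'a set" and n :: nat
  assumes VA: "\<And>k. Vs (A k)"
  shows "Vs (\<Union>k<n. A k)"
proof (induction n)
  case 0 then show ?case using Vs_empty by simp
next
  case (Suc n)
  have "(\<Union>k<Suc n. A k) = A n \<union> (\<Union>k<n. A k)" by (auto simp: lessThan_Suc)
  then show ?case using Vs_Un[OF VA Suc.IH] by simp
qed

lemma Vs_countable:
  fixes A :: "nat \<Rightarrow> 'a set"
  assumes VA: "\<And>k. Vs (A k)"
  shows "Vs (\<Union>k. A k)"
  unfolding Vs_def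
proof (intro conjI allI impI)
  have A[measurable]: "\<And>k. A k \<in> sets M" using VA by (auto simp: Vs_def)
  then have "range A \<subseteq> sets M" by auto
  then show "(\<Union>k. A k) \<in> sets M" by (rule sets.countable_UN)
  fix F assume H: "F \<in> borel_measurable M \<and> (\<integral>\<^sup>+ s. F s \<partial>M) \<noteq> \<infinity> \<and> (AE s in M. s \<notin> (\<Union>k. A k) \<longrightarrow> F s = 0)"
  then have F[measurable]: "F \<in> borel_measurable M" and Ffin: "(\<integral>\<^sup>+ s. F s \<partial>M) \<noteq> \<infinity>"
    and Fsupp: "AE s in M. s \<notin> (\<Union>k. A k) \<longrightarrow> F s = 0" by auto
  define Fn where "Fn n s = (if s \<in> (\<Union>k<n. A k) then F s else 0)" for n s
  define D where "D n s = (if s \<in> (\<Union>k<n. A k) then 0 else F s)" for n s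
  have Um[measurable]: "\<And>n. (\<Union>k<n. A k) \<in> sets M" by auto
  have Fnm: "Fn n \<in> borel_measurable M" for n unfolding Fn_def by measurable
  have Dm[measurable]: "D n \<in> borel_measurable M" for n unfolding D_def by measurable
  have FnD: "AE s in M. F s - Fn n s = D n s" for n
    using nn_integral_noteq_infinite[OF F Ffin] by eventually_elim (simp add: Fn_def D_def)
  have "(\<integral>\<^sup>+ s. (INF n. D n s) \<partial>M) = (INF n. integral\<^sup>N M (D n))"
  proof (rule nn_integral_monotone_convergence_INF_AE')
    show "\<And>i. AE x in M. D (Suc i) x \<le> D i x" by (auto simp: D_def lessThan_Suc)
    show "\<And>i. D i \<in> borel_measurable M" by simp
    have "D 0 = F" by (rule ext) (simp add: D_def)
    then show "integral\<^sup>N M (D 0) < \<infinity>" using Ffin by (simp add: less_top)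
  qed
  moreover have "(\<integral>\<^sup>+ s. (INF n. D n s) \<partial>M) = 0"
  proof (subst nn_integral_0_iff_AE)
    show "(\<lambda>s. INF n. D n s) \<in> borel_measurable M" by measurable
    show "AE x in M. (INF n. D n x) = 0"
      using Fsupp
    proof eventually_elim
      case (elim s)
      show ?case
      proof (cases "s \<in> (\<Union>k. A k)")
        case True
        then obtain k where "s \<in> A k" by auto
        then have "D (Suc k) s = 0" by (auto simp: D_def)
        then show ?thesis by (metis INF_lower UNIV_I le_zero_eq)
      next
        case False then show ?thesis using elim by (simp add: D_def)
      qed
    qed
  qed
  ultimately have INF0: "(INF n. integral\<^sup>N M (D n)) = 0" by simp
  show "((\<lambda>x. ov M \<phi> x F) \<longlongrightarrow> 0) (to_infinity G)"
  proof (rule approxD[OF F])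
    fix e :: real assume e: "0 < e"
    then have "(INF n. integral\<^sup>N M (D n)) < ennreal e" using INF0 by simp
    then obtain n where n: "integral\<^sup>N M (D n) < ennreal e" by (auto simp: INF_less_iff)
    have Vn: "Vs (\<Union>k<n. A k)" by (rule Vs_fin[OF VA])
    have ovn: "((\<lambda>x. ov M \<phi> x (Fn n)) \<longlongrightarrow> 0) (to_infinity G)"
    proof (rule VsD[OF Vn Fnm])
      have "(\<integral>\<^sup>+ s. Fn n s \<partial>M) \<le> (\<integral>\<^sup>+ s. F s \<partial>M)" by (intro nn_integral_mono) (simp add: Fn_def)
      then show "(\<integral>\<^sup>+ s. Fn n s \<partial>M) \<noteq> \<infinity>" using Ffin by (auto simp: top_unique)
      show "AE s in M. s \<notin> (\<Union>k<n. A k) \<longrightarrow> Fn n s = 0" by (simp add: Fn_def)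
    qed
    show "\<exists>F'. F' \<in> borel_measurable M \<and> (\<forall>s. F' s \<le> F s) \<and>
        (\<integral>\<^sup>+ s. F s - F' s \<partial>M) < ennreal e \<and> ((\<lambda>x. ov M \<phi> x F') \<longlongrightarrow> 0) (to_infinity G)"
    proof (intro exI[of _ "Fn n"] conjI allI)
      show "(\<integral>\<^sup>+ s. F s - Fn n s \<partial>M) < ennreal e"
        using n nn_integral_cong_AE[OF FnD[of n]] by simp
    qed (use Fnm ovn in \<open>auto simp: Fn_def\<close>)
  qed
qed

lemma hered:
  assumes Hm: "H \<in> borel_measurable M" and ovH: "((\<lambda>x. ov M \<phi> x H) \<longlongrightarrow> 0) (to_infinity G)"
    and F[measurable]: "F \<in> borel_measurable M" and Ffin: "(\<integral>\<^sup>+ s. F s \<partial>M) \<noteq> \<infinity>"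
    and supp: "AE s in M. H s = 0 \<longrightarrow> F s = 0"
  shows "((\<lambda>x. ov M \<phi> x F) \<longlongrightarrow> 0) (to_infinity G)"
proof (rule approxD[OF F])
  fix e :: real assume e: "0 < e"
  note Hm[measurable]
  define Fn where "Fn n s = min (F s) (of_nat n * H s)" for n s
  define D where "D n s = F s - Fn n s" for n s
  have Fnm[measurable]: "Fn n \<in> borel_measurable M" for n unfolding Fn_def by measurable
  have Dm[measurable]: "D n \<in> borel_measurable M" for n unfolding D_def by measurable
  have "(\<integral>\<^sup>+ s. (INF n. D n s) \<partial>M) = (INF n. integral\<^sup>N M (D n))"
  proof (rule nn_integral_monotone_convergence_INF_AE')
    have monoF: "Fn i x \<le> Fn (Suc i) x" for i x
      unfolding Fn_def by (intro min.mono order_refl mult_right_mono) auto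
    show "\<And>i. AE x in M. D (Suc i) x \<le> D i x"
    proof (rule AE_I2)
      fix i x show "D (Suc i) x \<le> D i x" unfolding D_def by (rule ennreal_mono_minus) (rule monoF)
    qed
    show "\<And>i. D i \<in> borel_measurable M" by simp
    have "D 0 = F" by (rule ext) (simp add: D_def Fn_def)
    then show "integral\<^sup>N M (D 0) < \<infinity>" using Ffin by (simp add: less_top)
  qed
  moreover have "(\<integral>\<^sup>+ s. (INF n. D n s) \<partial>M) = 0"
  proof (subst nn_integral_0_iff_AE)
    show "(\<lambda>s. INF n. D n s) \<in> borel_measurable M" by measurable
    show "AE x in M. (INF n. D n x) = 0"
      using supp nn_integral_noteq_infinite[OF F Ffin]
    proof eventually_elim
      case (elim s)
      show ?case
      proof (cases "H s = 0")
        case True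
        then have "D 0 s = 0" using elim by (simp add: D_def Fn_def)
        then show ?thesis by (metis INF_lower UNIV_I le_zero_eq)
      next
        case False
        have "(SUP n. of_nat n * H s) = (SUP n. of_nat n :: ennreal) * H s"
          by (simp add: SUP_mult_right_ennreal)
        also have "\<dots> = top" using False by (simp add: ennreal_SUP_of_nat_eq_top ennreal_top_mult)
        finally have SUPt: "(SUP n. of_nat n * H s) = top" .
        have "F s < (SUP n. of_nat n * H s)" unfolding SUPt using elim by (simp add: less_top)
        then obtain n where "F s < of_nat n * H s" by (auto simp: less_SUP_iff)
        then have "D n s = 0" using elim by (simp add: D_def Fn_def)
        then show ?thesis by (metis INF_lower UNIV_I le_zero_eq)
      qed
    qed
  qed
  ultimately have INF0: "(INF n. integral\<^sup>N M (D n)) = 0" by simp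
  then have "(INF n. integral\<^sup>N M (D n)) < ennreal e" using e by simp
  then obtain n where n: "integral\<^sup>N M (D n) < ennreal e" by (auto simp: INF_less_iff)
  have ovn: "((\<lambda>x. ov M \<phi> x (Fn n)) \<longlongrightarrow> 0) (to_infinity G)"
  proof (rule le_tendsto0)
    show "((\<lambda>x. of_nat n * ov M \<phi> x H) \<longlongrightarrow> 0) (to_infinity G)"
      using ennreal_tendsto_cmult[OF _ ovH, of "of_nat n"] by (simp add: of_nat_less_top)
    show "eventually (\<lambda>x. ov M \<phi> x (Fn n) \<le> of_nat n * ov M \<phi> x H) (to_infinity G)"
      using evG
    proof eventually_elim
      case (elim x)
      have UH: "Uop M \<phi> x H \<in> borel_measurable M" using U_meas[OF elim Hm] .
      have "ov M \<phi> x (Fn n) \<le> (\<integral>\<^sup>+ s. of_nat n * min (Uop M \<phi> x H s) (H s) \<partial>M)"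
        unfolding ov_def
      proof (intro nn_integral_mono)
        fix s
        have "Uop M \<phi> x (Fn n) s \<le> flow_weight M \<phi> x s * (of_nat n * H (\<phi> x s))"
          unfolding Uop_def Fn_def by (intro mult_left_mono) auto
        then have "Uop M \<phi> x (Fn n) s \<le> of_nat n * Uop M \<phi> x H s"
          unfolding Uop_def by (simp only: mult.left_commute)
        moreover have "Fn n s \<le> of_nat n * H s" by (simp add: Fn_def)
        ultimately have "min (Uop M \<phi> x (Fn n) s) (Fn n s) \<le> min (of_nat n * Uop M \<phi> x H s) (of_nat n * H s)"
          by (rule min.mono)
        then show "min (Uop M \<phi> x (Fn n) s) (Fn n s) \<le> of_nat n * min (Uop M \<phi> x H s) (H s)"
          by (simp only: mult_min_ennreal)
      qed
      also have "\<dots> = of_nat n * ov M \<phi> x H"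
        unfolding ov_def using UH by (simp add: nn_integral_cmult)
      finally show ?case .
    qed
  qed
  show "\<exists>F'. F' \<in> borel_measurable M \<and> (\<forall>s. F' s \<le> F s) \<and>
        (\<integral>\<^sup>+ s. F s - F' s \<partial>M) < ennreal e \<and> ((\<lambda>x. ov M \<phi> x F') \<longlongrightarrow> 0) (to_infinity G)"
  proof -
    have Dn: "D n = (\<lambda>s. F s - Fn n s)" by (rule ext) (simp add: D_def)
    show ?thesis using ovn n Fnm unfolding Dn by (intro exI[of _ "Fn n"]) (auto simp: Fn_def)
  qed
qed

lemma Vs_inv:
  assumes VA: "Vs A" and x: "x \<in> G"
  shows "Vs (\<phi> x -` A \<inter> space M)"
  unfolding Vs_def
proof (intro conjI allI impI)
  have A: "A \<in> sets M" using VA by (simp add: Vs_def)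
  show "\<phi> x -` A \<inter> space M \<in> sets M" using measurable_sets[OF phi_meas[OF x] A] .
  fix F assume H: "F \<in> borel_measurable M \<and> (\<integral>\<^sup>+ s. F s \<partial>M) \<noteq> \<infinity> \<and> (AE s in M. s \<notin> \<phi> x -` A \<inter> space M \<longrightarrow> F s = 0)"
  then have F[measurable]: "F \<in> borel_measurable M" and Ffin: "(\<integral>\<^sup>+ s. F s \<partial>M) \<noteq> \<infinity>"
    and Fsupp: "AE s in M. s \<notin> \<phi> x -` A \<inter> space M \<longrightarrow> F s = 0" by auto
  have mx: "-x \<in> G" using G_uminus x .
  define F2 where "F2 = Uop M \<phi> (-x) F"
  have F2m: "F2 \<in> borel_measurable M" unfolding F2_def using U_meas[OF mx F] .
  have F2fin: "(\<integral>\<^sup>+ s. F2 s \<partial>M) \<noteq> \<infinity>" unfolding F2_def using mass[OF mx F] Ffin by simp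
  have F2supp: "AE s in M. s \<notin> A \<longrightarrow> F2 s = 0"
    using AE_pull[OF mx Fsupp] AE_space
  proof eventually_elim
    case (elim s)
    show ?case
    proof
      assume "s \<notin> A"
      then have "\<phi> (-x) s \<notin> \<phi> x -` A \<inter> space M" using phi_inv[OF x elim(2)] by auto
      then show "F2 s = 0" using elim(1) by (simp add: F2_def Uop_def)
    qed
  qed
  have ov2: "((\<lambda>v. ov M \<phi> v F2) \<longlongrightarrow> 0) (to_infinity G)" by (rule VsD[OF VA F2m F2fin F2supp])
  have eq: "ov M \<phi> v F2 = ov M \<phi> v F" if v: "v \<in> G" for v
  proof -
    have mv: "-v \<in> G" using G_uminus v .
    have vx: "v - x \<in> G" using G_diff v x .
    have "ov M \<phi> v F2 = (\<integral>\<^sup>+ s. min (Uop M \<phi> (v - x) F s) (Uop M \<phi> (-x) F s) \<partial>M)"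
      unfolding ov_def F2_def
    proof (rule nn_integral_cong_AE)
      have e1: "- x - - v = v - x" by (simp add: algebra_simps)
      have c: "AE s in M. Uop M \<phi> v (Uop M \<phi> (- x) F) s = Uop M \<phi> (v - x) F s"
        using cocycle[OF mx mv F] unfolding minus_minus e1 .
      show "AE s in M. min (Uop M \<phi> v (Uop M \<phi> (- x) F) s) (Uop M \<phi> (- x) F s) = min (Uop M \<phi> (v - x) F s) (Uop M \<phi> (- x) F s)"
        using c by eventually_elim simp
    qed
    also have "\<dots> = ov M \<phi> ((v - x) - (-x)) F" by (rule pair[OF vx mx F])
    also have "(v - x) - (-x) = v" by simp
    finally show ?thesis .
  qed
  have ev: "eventually (\<lambda>v. ov M \<phi> v F2 = ov M \<phi> v F) (to_infinity G)"
    using evG by eventually_elim (rule eq)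
  show "((\<lambda>v. ov M \<phi> v F) \<longlongrightarrow> 0) (to_infinity G)" using ov2 tendsto_cong[OF ev] by blast
qed

end



lemma Limsup_tendsto0:
  fixes f :: "_ \<Rightarrow> ennreal"
  assumes "(f \<longlongrightarrow> 0) F"
  shows "Limsup F f = 0"
proof -
  have "Limsup F f \<le> 0"
  proof (rule ennreal_le_epsilon)
    fix e :: real assume e: "0 < e"
    have "eventually (\<lambda>x. f x < ennreal e) F" using assms e by (intro order_tendstoD) auto
    then have "eventually (\<lambda>x. f x \<le> ennreal e) F" by eventually_elim simp
    then show "Limsup F f \<le> 0 + ennreal e" by (simp add: Limsup_bounded)
  qed
  then show ?thesis by simp
qed

lemma Limsup0_tendsto:
  fixes f :: "_ \<Rightarrow> ennreal"
  assumes "Limsup F f = 0"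
  shows "(f \<longlongrightarrow> 0) F"
proof (rule order_tendstoI)
  fix e :: ennreal assume "e < 0" then show "eventually (\<lambda>x. e < f x) F" by simp
next
  fix e :: ennreal assume "0 < e" then show "eventually (\<lambda>x. f x < e) F"
    using assms by (intro Limsup_lessD) simp
qed

context FL begin

interpretation sigma_finite_measure M by (rule SF)

lemma cross:
  assumes V: "vanishing_part M G \<phi> A" and P: "positive_part M G \<phi> B"
    and A: "A \<in> sets M" and B: "B \<in> sets M"
  shows "emeasure M (A \<inter> B) = 0"
proof (rule ccontr)
  assume C0: "emeasure M (A \<inter> B) \<noteq> 0"
  define C where "C = A \<inter> B"
  have C[measurable]: "C \<in> sets M" using A B by (simp add: C_def)
  obtain w where w: "w \<in> borel_measurable M" "integral\<^sup>N M w \<noteq> \<infinity>" "\<And>s. s \<in> space M \<Longrightarrow> 0 < w s \<and> w s < \<infinity>"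
    using Ex_finite_integrable_function by blast
  note w(1)[measurable]
  define h where "h s = enn2real (w s) * indicator C s" for s
  have hm[measurable]: "h \<in> borel_measurable M" unfolding h_def by measurable
  have hle: "ennreal (norm (h s)) \<le> w s" if s: "s \<in> space M" for s
    using w(3)[OF s] by (auto simp: h_def indicator_def less_top)
  have "(\<integral>\<^sup>+ s. ennreal (norm (h s)) \<partial>M) \<le> integral\<^sup>N M w" by (intro nn_integral_mono hle)
  then have hint: "integrable M h" using w(2) by (intro integrableI_bounded hm) (auto simp: less_top top_unique)
  have hpos: "AE s in M. h s \<ge> 0" by (simp add: h_def)
  have "\<not> (AE s in M. h s = 0)"
  proof
    assume "AE s in M. h s = 0"
    then have "AE s in M. s \<notin> C"
    proof (rule AE_mp)
      show "AE s in M. h s = 0 \<longrightarrow> s \<notin> C"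
      proof (rule AE_I2, rule impI)
        fix s assume s: "s \<in> space M" and "h s = 0"
        then show "s \<notin> C" using w(3)[OF s] by (auto simp: h_def indicator_def enn2real_eq_0_iff)
      qed
    qed
    then have "emeasure M C = 0" using AE_iff_measurable[OF C, of "\<lambda>s. s \<notin> C"] sets.sets_into_space[OF C] by auto
    then show False using C0 by (simp add: C_def)
  qed
  moreover have "AE s in M. s \<notin> A \<longrightarrow> h s = 0" by (auto simp: h_def C_def)
  moreover have "AE s in M. s \<notin> B \<longrightarrow> h s = 0" by (auto simp: h_def C_def)
  ultimately have T: "((\<lambda>x. overlap M \<phi> x h) \<longlongrightarrow> 0) (to_infinity G)"
    and L: "Limsup (to_infinity G) (\<lambda>x. overlap M \<phi> x h) > 0"
    using V P hint hpos unfolding vanishing_part_def positive_part_def by blast+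
  from Limsup_tendsto0[OF T] L show False by simp
qed

lemma main:
  shows "\<exists>N0 Np. N0 \<in> sets M \<and> Np \<in> sets M \<and> N0 \<inter> Np = {} \<and> N0 \<union> Np = space M
      \<and> invariant_mod0 M G \<phi> N0 \<and> invariant_mod0 M G \<phi> Np
      \<and> vanishing_part M G \<phi> N0 \<and> positive_part M G \<phi> Np
      \<and> (\<forall>N0' Np'. N0' \<in> sets M \<and> Np' \<in> sets M \<and> N0' \<inter> Np' = {} \<and> N0' \<union> Np' = space M
            \<and> vanishing_part M G \<phi> N0' \<and> positive_part M G \<phi> Np' \<longrightarrow>
            emeasure M ((N0 - N0') \<union> (N0' - N0)) = 0 \<and> emeasure M ((Np - Np') \<union> (Np' - Np)) = 0)"
proof -
  obtain w where w: "w \<in> borel_measurable M" "integral\<^sup>N M w \<noteq> \<infinity>" "\<And>s. s \<in> space M \<Longrightarrow> 0 < w s \<and> w s < \<infinity>"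
    using Ex_finite_integrable_function by blast
  note w(1)[measurable]
  define W where "W = density M w"
  have W0: "emeasure W A = 0 \<longleftrightarrow> emeasure M A = 0" if A[measurable]: "A \<in> sets M" for A
  proof -
    have "emeasure W A = (\<integral>\<^sup>+ s. w s * indicator A s \<partial>M)" unfolding W_def by (simp add: emeasure_density)
    also have "\<dots> = 0 \<longleftrightarrow> (AE s in M. w s * indicator A s = 0)" by (simp add: nn_integral_0_iff_AE)
    also have "(AE s in M. w s * indicator A s = 0) \<longleftrightarrow> (AE s in M. s \<notin> A)"
    proof (rule AE_cong)
      fix s assume s: "s \<in> space M" then show "(w s * indicator A s = 0) = (s \<notin> A)"
        using w(3)[OF s] by (auto simp: indicator_def)
    qed
    also have "\<dots> \<longleftrightarrow> emeasure M A = 0"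
      using AE_iff_measurable[OF A, of "\<lambda>s. s \<notin> A"] sets.sets_into_space[OF A] by auto
    finally show ?thesis .
  qed
  have Wfin: "emeasure W A \<noteq> \<infinity>" if A: "A \<in> sets M" for A
  proof -
    have "emeasure W A = (\<integral>\<^sup>+ s. w s * indicator A s \<partial>M)" using A unfolding W_def by (simp add: emeasure_density)
    also have "\<dots> \<le> integral\<^sup>N M w" by (intro nn_integral_mono) (simp add: indicator_def)
    finally show ?thesis using w(2) by (auto simp: top_unique)
  qed
  have sW: "sets W = sets M" by (simp add: W_def)
  define S where "S = {emeasure W A | A. Vs A}"
  have "S \<noteq> {}" using Vs_empty unfolding S_def by blast
  then obtain f :: "nat \<Rightarrow> ennreal" where f: "range f \<subseteq> S" "Sup S = (SUP i. f i)"
    using ennreal_Sup_countable_SUP by blast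
  have "\<forall>i. \<exists>A. Vs A \<and> f i = emeasure W A" using f(1) unfolding S_def by blast
  then obtain As where As: "\<And>i. Vs (As i)" "\<And>i. f i = emeasure W (As i)" by metis
  define N0 where "N0 = (\<Union>i. As i)"
  have VN0: "Vs N0" unfolding N0_def by (rule Vs_countable[OF As(1)])
  have N0[measurable]: "N0 \<in> sets M" using VN0 by (simp add: Vs_def)
  have supper: "emeasure W A \<le> Sup S" if "Vs A" for A using that unfolding S_def by (blast intro: Sup_upper)
  have "Sup S \<le> emeasure W N0"
    unfolding f(2)
  proof (rule SUP_least)
    fix i
    have "As i \<subseteq> N0" by (auto simp: N0_def)
    then show "f i \<le> emeasure W N0" unfolding As(2) using As(1)[of i] sW
      by (intro emeasure_mono) (auto simp: Vs_def)
  qed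
  then have WN0: "emeasure W N0 = Sup S" using supper[OF VN0] by simp
  have maxi: "emeasure M (B - N0) = 0" if VB: "Vs B" for B
  proof -
    have B: "B \<in> sets M" using VB by (simp add: Vs_def)
    have "Vs (N0 \<union> B)" by (rule Vs_Un[OF VN0 VB])
    then have "emeasure W (N0 \<union> B) \<le> emeasure W N0" using supper WN0 by simp
    moreover have "emeasure W (N0 \<union> B) = emeasure W N0 + emeasure W (B - N0)"
    proof -
      have "N0 \<union> B = N0 \<union> (B - N0)" by auto
      then show ?thesis using plus_emeasure[of N0 W "B - N0"] B sW by auto
    qed
    ultimately have "emeasure W N0 + emeasure W (B - N0) \<le> emeasure W N0 + 0" by simp
    then have "emeasure W (B - N0) \<le> 0" using Wfin[OF N0] by (simp add: ennreal_add_left_cancel_le)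
    then have "emeasure W (B - N0) = 0" by simp
    then show ?thesis using W0[of "B - N0"] B by simp
  qed
  define Np where "Np = space M - N0"
  have Np[measurable]: "Np \<in> sets M" by (simp add: Np_def)
  have N0sp: "N0 \<subseteq> space M" using sets.sets_into_space[OF N0] .
  have inv0: "invariant_mod0 M G \<phi> N0"
    unfolding invariant_mod0_def
  proof (intro ballI)
    fix x assume x: "x \<in> G"
    have mx: "-x \<in> G" using G_uminus x .
    define T where "T = \<phi> x -` N0 \<inter> space M"
    define T' where "T' = \<phi> (-x) -` N0 \<inter> space M"
    have T[measurable]: "T \<in> sets M" unfolding T_def using measurable_sets[OF phi_meas[OF x] N0] .
    have T'[measurable]: "T' \<in> sets M" unfolding T'_def using measurable_sets[OF phi_meas[OF mx] N0] .
    have n1: "emeasure M (T - N0) = 0" using maxi[OF Vs_inv[OF VN0 x]] by (simp add: T_def)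
    have n2: "emeasure M (T' - N0) = 0" using maxi[OF Vs_inv[OF VN0 mx]] by (simp add: T'_def)
    have eq: "N0 - T = \<phi> x -` (T' - N0) \<inter> space M"
    proof (intro equalityI subsetI)
      fix s assume "s \<in> N0 - T"
      then have s: "s \<in> N0" "s \<in> space M" "\<phi> x s \<notin> N0" using N0sp by (auto simp: T_def)
      have "\<phi> (-x) (\<phi> x s) = s" using phi_inv[OF mx s(2)] by simp
      then show "s \<in> \<phi> x -` (T' - N0) \<inter> space M"
        using s phi_space[OF x s(2)] by (auto simp: T'_def)
    next
      fix s assume "s \<in> \<phi> x -` (T' - N0) \<inter> space M"
      then have s: "s \<in> space M" "\<phi> (-x) (\<phi> x s) \<in> N0" "\<phi> x s \<notin> N0" by (auto simp: T'_def)
      have "\<phi> (-x) (\<phi> x s) = s" using phi_inv[OF mx s(1)] by simp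
      then show "s \<in> N0 - T" using s by (auto simp: T_def)
    qed
    have n3: "emeasure M (N0 - T) = 0" unfolding eq using phi_null[OF x] n2 T' N0 by simp
    have "(T - N0) \<union> (N0 - T) \<in> null_sets M" using n1 n3 T N0 by (intro null_sets.Un null_setsI) auto
    then show "emeasure M ((\<phi> x -` N0 \<inter> space M - N0) \<union> (N0 - \<phi> x -` N0 \<inter> space M)) = 0"
      unfolding T_def by (rule null_setsD1)
  qed
  have invp: "invariant_mod0 M G \<phi> Np"
    unfolding invariant_mod0_def
  proof (intro ballI)
    fix x assume x: "x \<in> G"
    have e: "(\<phi> x -` Np \<inter> space M - Np) \<union> (Np - \<phi> x -` Np \<inter> space M)
        = (N0 - \<phi> x -` N0 \<inter> space M) \<union> (\<phi> x -` N0 \<inter> space M - N0)"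
      using phi_space[OF x] N0sp by (auto simp: Np_def)
    show "emeasure M ((\<phi> x -` Np \<inter> space M - Np) \<union> (Np - \<phi> x -` Np \<inter> space M)) = 0"
      unfolding e using inv0 x unfolding invariant_mod0_def by (simp add: Un_commute)
  qed
  have van: "vanishing_part M G \<phi> N0"
    unfolding vanishing_part_def
  proof (intro allI impI)
    fix g :: "'a \<Rightarrow> real" assume g: "integrable M g \<and> (AE s in M. g s \<ge> 0) \<and> (AE s in M. s \<notin> N0 \<longrightarrow> g s = 0)"
    have gm: "(\<lambda>s. ennreal (g s)) \<in> borel_measurable M" using g by auto
    have gf: "(\<integral>\<^sup>+ s. ennreal (g s) \<partial>M) \<noteq> \<infinity>" using g by auto
    have gs: "AE s in M. s \<notin> N0 \<longrightarrow> ennreal (g s) = 0" using g by auto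
    show "((\<lambda>x. overlap M \<phi> x g) \<longlongrightarrow> 0) (to_infinity G)"
      unfolding overlap_ov by (rule VsD[OF VN0 gm gf gs])
  qed
  have pos: "positive_part M G \<phi> Np"
    unfolding positive_part_def
  proof (intro allI impI)
    fix h :: "'a \<Rightarrow> real" assume h: "integrable M h \<and> (AE s in M. h s \<ge> 0) \<and> (AE s in M. s \<notin> Np \<longrightarrow> h s = 0) \<and> \<not> (AE s in M. h s = 0)"
    have hm[measurable]: "h \<in> borel_measurable M" using h by auto
    show "Limsup (to_infinity G) (\<lambda>x. overlap M \<phi> x h) > 0"
    proof (rule ccontr)
      assume "\<not> ?thesis"
      then have "Limsup (to_infinity G) (\<lambda>x. overlap M \<phi> x h) = 0" by simp
      then have T: "((\<lambda>x. ov M \<phi> x (\<lambda>s. ennreal (h s))) \<longlongrightarrow> 0) (to_infinity G)"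
        unfolding overlap_ov by (rule Limsup0_tendsto)
      define B where "B = {s \<in> space M. 0 < h s} - N0"
      have Bm: "B \<in> sets M" unfolding B_def by measurable
      have VB: "Vs B"
        unfolding Vs_def
      proof (intro conjI allI impI)
        show "B \<in> sets M" by (rule Bm)
        fix F assume F: "F \<in> borel_measurable M \<and> (\<integral>\<^sup>+ s. F s \<partial>M) \<noteq> \<infinity> \<and> (AE s in M. s \<notin> B \<longrightarrow> F s = 0)"
        show "((\<lambda>x. ov M \<phi> x F) \<longlongrightarrow> 0) (to_infinity G)"
        proof (rule hered[of "\<lambda>s. ennreal (h s)"])
          show "AE s in M. ennreal (h s) = 0 \<longrightarrow> F s = 0"
            using F h
          proof (elim conjE)
            assume F3: "AE s in M. s \<notin> B \<longrightarrow> F s = 0" and h3: "AE s in M. s \<notin> Np \<longrightarrow> h s = 0"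
            show ?thesis using F3 h3
            proof eventually_elim
              case (elim s)
              show ?case
              proof
                assume "ennreal (h s) = 0"
                then have "h s \<le> 0" by (simp add: ennreal_eq_0_iff)
                then have "s \<notin> B" by (auto simp: B_def)
                then show "F s = 0" using elim by simp
              qed
            qed
          qed
        qed (use F T in auto)
      qed
      have "emeasure M B = 0" using maxi[OF VB] by (simp add: B_def Diff_Diff_Int)
      then have "AE s in M. s \<notin> B" using Bm by (intro AE_not_in null_setsI)
      then have "AE s in M. h s = 0" using h
      proof (elim conjE)
        assume AB: "AE s in M. s \<notin> B" and h2: "AE s in M. h s \<ge> 0" and h3: "AE s in M. s \<notin> Np \<longrightarrow> h s = 0"
        show ?thesis using AB h2 h3 AE_space
        proof eventually_elim
          case (elim s)
          show ?case
          proof (cases "s \<in> N0")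
            case True then have "s \<notin> Np" by (simp add: Np_def)
            then show ?thesis using elim by simp
          next
            case False then show ?thesis using elim by (auto simp: B_def)
          qed
        qed
      qed
      then show False using h by simp
    qed
  qed
  have uniq: "emeasure M ((N0 - N0') \<union> (N0' - N0)) = 0 \<and> emeasure M ((Np - Np') \<union> (Np' - Np)) = 0"
    if H: "N0' \<in> sets M \<and> Np' \<in> sets M \<and> N0' \<inter> Np' = {} \<and> N0' \<union> Np' = space M
            \<and> vanishing_part M G \<phi> N0' \<and> positive_part M G \<phi> Np'" for N0' Np'
  proof -
    have N0'[measurable]: "N0' \<in> sets M" and Np'[measurable]: "Np' \<in> sets M" using H by auto
    have c1: "emeasure M (N0 \<inter> Np') = 0" using cross[OF van _ N0 Np'] H by auto
    have c2: "emeasure M (N0' \<inter> Np) = 0" using cross[of N0' Np] H pos N0' Np by auto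
    have nul: "(N0 \<inter> Np') \<union> (N0' \<inter> Np) \<in> null_sets M" using c1 c2 by (intro null_sets.Un null_setsI) auto
    have e1: "(N0 - N0') \<union> (N0' - N0) = (N0 \<inter> Np') \<union> (N0' \<inter> Np)" using H N0sp by (auto simp: Np_def)
    have e2: "(Np - Np') \<union> (Np' - Np) = (N0' \<inter> Np) \<union> (N0 \<inter> Np')" using H N0sp by (auto simp: Np_def)
    have nul2: "(N0' \<inter> Np) \<union> (N0 \<inter> Np') \<in> null_sets M" using nul by (simp add: Un_commute)
    show ?thesis unfolding e1 e2 using null_setsD1[OF nul] null_setsD1[OF nul2] by simp
  qed
  show ?thesis
    apply (rule exI[of _ N0], rule exI[of _ Np])
    using N0 Np N0sp inv0 invp van pos uniq by (auto simp: Np_def)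
qed

end

theorem theorem5p3:
  fixes M :: "'a measure" and G :: "(real^'d) set" and \<phi> :: "real^'d \<Rightarrow> 'a \<Rightarrow> 'a"
  assumes "lattice_or_space G"
    and "sigma_finite_measure M"
    and "nonsingular_flow M G \<phi>"
  shows "\<exists>N0 Np. N0 \<in> sets M \<and> Np \<in> sets M \<and> N0 \<inter> Np = {} \<and> N0 \<union> Np = space M
      \<and> invariant_mod0 M G \<phi> N0 \<and> invariant_mod0 M G \<phi> Np
      \<and> vanishing_part M G \<phi> N0 \<and> positive_part M G \<phi> Np
      \<and> (\<forall>N0' Np'. N0' \<in> sets M \<and> Np' \<in> sets M \<and> N0' \<inter> Np' = {} \<and> N0' \<union> Np' = space M
            \<and> vanishing_part M G \<phi> N0' \<and> positive_part M G \<phi> Np' \<longrightarrow>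
            emeasure M ((N0 - N0') \<union> (N0' - N0)) = 0 \<and> emeasure M ((Np - Np') \<union> (Np' - Np)) = 0)"
proof -
  interpret FL M G \<phi> by (rule FL.intro[OF assms])
  show ?thesis by (rule main)
qed



end
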